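(* If $X$ and $Y$ are directed acyclic graphs with $|V(X)|=|V(Y)|=n$, then $\mathrm{DFS}(X,Y)$ is acyclic, i.e. it contains no directed cycle.
   Context: Directed graphs are finite and loopless but may have multiple edges. For distinct vertices $a,b$ of a directed graph $X$, $m_X(a,b)\ge 0$ denotes the number of edges from $a$ to $b$ in $X$. A directed graph is acyclic if it has no directed cycle. For directed graphs $X,Y$ with $|V(X)|=|V(Y)|$, the directed friends-and-seats graph $\mathrm{DFS}(X,Y)$ is defined as follows. Its vertices are the bijections $\sigma:V(X)\to V(Y)$. For every bijection $\sigma$ and every ordered pair $(a,b)$ of distinct vertices of $X$, it has exactly $m_X(a,b)\,m_Y(\sigma(a),\sigma(b))$ edges from $\sigma$ to $\sigma\circ(a\,b)$, where $(a\,b)$ is the transposition exchanging $a$ and $b$. It has no other edges. *)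

theory Defs
  imports "HOL-Library.FuncSet" "HOL-Combinatorics.Transposition"
begin

text \<open>A finite loopless directed multigraph is given by a finite vertex set V and an
edge multiplicity function m, where m a b is the number of edges from a to b.\<close>

definition dmultigraph :: "'a set \<Rightarrow> ('a \<Rightarrow> 'a \<Rightarrow> nat) \<Rightarrow> bool" where
  "dmultigraph V m \<longleftrightarrow> finite V \<and> (\<forall>a b. m a b > 0 \<longrightarrow> a \<in> V \<and> b \<in> V \<and> a \<noteq> b)"

definition dacyclic :: "'a set \<Rightarrow> ('a \<Rightarrow> 'a \<Rightarrow> nat) \<Rightarrow> bool" where
  "dacyclic V m \<longleftrightarrow> acyclic {(a, b). a \<in> V \<and> b \<in> V \<and> m a b > 0}"

definition dfs_vertices :: "'a set \<Rightarrow> 'b set \<Rightarrow> ('a \<Rightarrow> 'b) set" where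
  "dfs_vertices VX VY = {\<sigma>. \<sigma> \<in> extensional VX \<and> bij_betw \<sigma> VX VY}"

definition dfs_mult :: "'a set \<Rightarrow> ('a \<Rightarrow> 'a \<Rightarrow> nat) \<Rightarrow> ('b \<Rightarrow> 'b \<Rightarrow> nat)
    \<Rightarrow> ('a \<Rightarrow> 'b) \<Rightarrow> ('a \<Rightarrow> 'b) \<Rightarrow> nat" where
  "dfs_mult VX mX mY \<sigma> \<tau> =
     (\<Sum>(a, b) \<in> {(a, b). a \<in> VX \<and> b \<in> VX \<and> a \<noteq> b \<and> \<tau> = \<sigma> \<circ> transpose a b}.
        mX a b * mY (\<sigma> a) (\<sigma> b))"

end

theory Submission
  imports Defs
begin

lemma acyc_height:
  assumes "finite V" "acyclic r" "r \<subseteq> V \<times> V"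
  shows "\<exists>h::'a\<Rightarrow>int. \<forall>a b. (a,b)\<in>r \<longrightarrow> h a < h b"
proof -
  have tr: "r\<^sup>+ \<subseteq> V \<times> V" using assms(3) by (metis trancl_subset_Sigma)
  define h where "h a = int (card {c. (c,a)\<in>r\<^sup>+})" for a
  have "h a < h b" if ab: "(a,b)\<in>r" for a b
  proof -
    have sub: "{c. (c,a)\<in>r\<^sup>+} \<subseteq> {c. (c,b)\<in>r\<^sup>+}" using ab
      by (auto intro: trancl_into_trancl)
    have "a \<in> {c. (c,b)\<in>r\<^sup>+}" using ab by auto
    moreover have "a \<notin> {c. (c,a)\<in>r\<^sup>+}" using assms(2) by (auto simp: acyclic_def)
    ultimately have ps: "{c. (c,a)\<in>r\<^sup>+} \<subset> {c. (c,b)\<in>r\<^sup>+}" using sub by blast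
    have fin: "finite {c. (c,b)\<in>r\<^sup>+}"
      using tr assms(1) by (metis (no_types, lifting) finite_subset mem_Collect_eq mem_Sigma_iff subsetD subsetI)
    show ?thesis unfolding h_def using psubset_card_mono[OF fin ps] by simp
  qed
  thus ?thesis by blast
qed

lemma decr_acyclic:
  assumes "\<And>x y. (x,y)\<in>R \<Longrightarrow> (f y::int) < f x"
  shows "acyclic R"
proof -
  have "(x,y)\<in>R\<^sup>+ \<Longrightarrow> f y < f x" for x y
    by (induction rule: trancl_induct) (use assms in force)+
  thus ?thesis unfolding acyclic_def by blast
qed

theorem mainTheorem5:
  fixes VX :: "'a set" and mX :: "'a \<Rightarrow> 'a \<Rightarrow> nat"
    and VY :: "'b set" and mY :: "'b \<Rightarrow> 'b \<Rightarrow> nat"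
  assumes "dmultigraph VX mX" and "dmultigraph VY mY"
    and "dacyclic VX mX" and "dacyclic VY mY"
    and "card VX = card VY"
  shows "dacyclic (dfs_vertices VX VY) (dfs_mult VX mX mY)"
proof -
  have fX: "finite VX" and fY: "finite VY" using assms(1,2) by (auto simp: dmultigraph_def)
  obtain hX :: "'a \<Rightarrow> int" where hX: "\<And>a b. a\<in>VX \<Longrightarrow> b\<in>VX \<Longrightarrow> mX a b > 0 \<Longrightarrow> hX a < hX b"
    using acyc_height[OF fX, of "{(a, b). a \<in> VX \<and> b \<in> VX \<and> mX a b > 0}"] assms(3)
    unfolding dacyclic_def by blast
  obtain hY :: "'b \<Rightarrow> int" where hY: "\<And>a b. a\<in>VY \<Longrightarrow> b\<in>VY \<Longrightarrow> mY a b > 0 \<Longrightarrow> hY a < hY b"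
    using acyc_height[OF fY, of "{(a, b). a \<in> VY \<and> b \<in> VY \<and> mY a b > 0}"] assms(4)
    unfolding dacyclic_def by blast
  define \<Phi> where "\<Phi> \<sigma> = (\<Sum>x\<in>VX. hX x * hY (\<sigma> x))" for \<sigma> :: "'a \<Rightarrow> 'b"
  have step: "\<Phi> \<tau> < \<Phi> \<sigma>" if pos: "dfs_mult VX mX mY \<sigma> \<tau> > 0" for \<sigma> \<tau>
  proof -
    let ?S = "{(a, b). a \<in> VX \<and> b \<in> VX \<and> a \<noteq> b \<and> \<tau> = \<sigma> \<circ> transpose a b}"
    obtain a b where ab: "(a,b) \<in> ?S" "mX a b * mY (\<sigma> a) (\<sigma> b) > 0"
      using pos unfolding dfs_mult_def
      by (metis (no_types, lifting) case_prod_conv not_less_zero prod.collapse sum_pos2 sum.neutral gr0I)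
    hence a: "a\<in>VX" and b: "b\<in>VX" and ne: "a\<noteq>b" and tau: "\<tau> = \<sigma> \<circ> transpose a b"
      and mx: "mX a b > 0" and my: "mY (\<sigma> a) (\<sigma> b) > 0" by auto
    have "\<sigma> a \<in> VY" "\<sigma> b \<in> VY" using my assms(2) by (auto simp: dmultigraph_def)
    hence lt1: "hX a < hX b" and lt2: "hY (\<sigma> a) < hY (\<sigma> b)" using hX[OF a b mx] hY my by auto
    have "\<Phi> \<tau> = (\<Sum>x\<in>VX. hX x * hY (\<sigma> (transpose a b x)))" by (simp add: \<Phi>_def tau)
    also have "\<dots> = (\<Sum>y\<in>VX. hX (transpose a b y) * hY (\<sigma> y))"
    proof -
      have bij: "bij_betw (transpose a b) VX VX" using a b
        by (simp add: bij_betw_def inj_on_def transpose_image_eq transpose_eq_iff) blast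
      show ?thesis
        using sum.reindex_bij_betw[OF bij, of "\<lambda>x. hX x * hY (\<sigma> (transpose a b x))"]
        by simp
    qed
    finally have eq: "\<Phi> \<tau> - \<Phi> \<sigma> = (\<Sum>y\<in>VX. (hX (transpose a b y) - hX y) * hY (\<sigma> y))"
      by (simp add: \<Phi>_def sum_subtractf algebra_simps)
    also have "\<dots> = (\<Sum>y\<in>{a,b}. (hX (transpose a b y) - hX y) * hY (\<sigma> y))"
      by (rule sum.mono_neutral_right) (use fX a b in auto)
    also have "\<dots> = (hX b - hX a) * (hY (\<sigma> a) - hY (\<sigma> b))"
      using ne by (simp add: algebra_simps)
    also have "\<dots> < 0" using lt1 lt2 by (simp add: mult_pos_neg)
    finally show ?thesis by simp
  qed
  show ?thesis unfolding dacyclic_def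
    by (rule decr_acyclic[where f=\<Phi>]) (use step in auto)
qed

end
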